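(* Let $G$ be a graph, $H=G^2$, and $n\ge 1$. Then every induced subgraph of $H$ isomorphic to $K_{1,n}$ is contained in a (not necessarily induced) subgraph of $H$ isomorphic to $(D_n)^2$ or to $(D_n^-)^2$.
   Context: All graphs are finite and simple. For a graph $H$, the square $H^2$ has vertex set $V(H)$, two distinct vertices being adjacent iff their distance in $H$ is at most $2$. $D_n$ is the graph with vertex set $\{v,u_1,\dots,u_n,w_1,\dots,w_n\}$ and edge set $\{vu_i:1\le i\le n\}\cup\{u_iw_i:1\le i\le n\}$ (a subdivided star), and $D_n^-$ is the graph $D_n-w_n$ obtained by deleting the vertex $w_n$. *)

theory Defs
  imports Main
begin

definition simple_graph :: "'a set \<Rightarrow> ('a \<Rightarrow> 'a \<Rightarrow> bool) \<Rightarrow> bool" where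
  "simple_graph V E \<longleftrightarrow> finite V \<and>
     (\<forall>u v. E u v \<longrightarrow> u \<in> V \<and> v \<in> V \<and> u \<noteq> v \<and> E v u)"

definition graph_square :: "'a set \<Rightarrow> ('a \<Rightarrow> 'a \<Rightarrow> bool) \<Rightarrow> 'a \<Rightarrow> 'a \<Rightarrow> bool" where
  "graph_square V E u w \<longleftrightarrow> u \<in> V \<and> w \<in> V \<and> u \<noteq> w \<and>
     (E u w \<or> (\<exists>x\<in>V. E u x \<and> E x w))"

definition is_subgraph :: "'a set \<Rightarrow> ('a \<Rightarrow> 'a \<Rightarrow> bool) \<Rightarrow> 'a set \<Rightarrow> ('a \<Rightarrow> 'a \<Rightarrow> bool) \<Rightarrow> bool" where
  "is_subgraph V1 E1 V2 E2 \<longleftrightarrow> V1 \<subseteq> V2 \<and>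
     (\<forall>u v. E1 u v \<longrightarrow> u \<in> V1 \<and> v \<in> V1 \<and> E2 u v)"

definition induced_edges :: "'a set \<Rightarrow> ('a \<Rightarrow> 'a \<Rightarrow> bool) \<Rightarrow> 'a \<Rightarrow> 'a \<Rightarrow> bool" where
  "induced_edges S E u v \<longleftrightarrow> u \<in> S \<and> v \<in> S \<and> E u v"

definition graph_iso :: "'a set \<Rightarrow> ('a \<Rightarrow> 'a \<Rightarrow> bool) \<Rightarrow> 'b set \<Rightarrow> ('b \<Rightarrow> 'b \<Rightarrow> bool) \<Rightarrow> bool" where
  "graph_iso V1 E1 V2 E2 \<longleftrightarrow> (\<exists>f. bij_betw f V1 V2 \<and>
     (\<forall>u\<in>V1. \<forall>v\<in>V1. E1 u v \<longleftrightarrow> E2 (f u) (f v)))"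

definition star_V :: "nat \<Rightarrow> nat set" where "star_V n = {0..n}"
definition star_E :: "nat \<Rightarrow> nat \<Rightarrow> nat \<Rightarrow> bool" where
  "star_E n a b \<longleftrightarrow> a \<in> {0..n} \<and> b \<in> {0..n} \<and> ((a = 0 \<and> b \<noteq> 0) \<or> (b = 0 \<and> a \<noteq> 0))"

(* D_n: v = 0, u_i = i, w_i = n + i  (1 \<le> i \<le> n) *)
definition D_V :: "nat \<Rightarrow> nat set" where "D_V n = {0..2*n}"
definition D_E :: "nat \<Rightarrow> nat \<Rightarrow> nat \<Rightarrow> bool" where
  "D_E n a b \<longleftrightarrow> (\<exists>i\<in>{1..n}. (a = 0 \<and> b = i) \<or> (a = i \<and> b = 0)
                            \<or> (a = i \<and> b = n + i) \<or> (a = n + i \<and> b = i))"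

definition Dm_V :: "nat \<Rightarrow> nat set" where "Dm_V n = D_V n - {2*n}"
definition Dm_E :: "nat \<Rightarrow> nat \<Rightarrow> nat \<Rightarrow> bool" where
  "Dm_E n = induced_edges (Dm_V n) (D_E n)"

end

theory Submission
  imports Defs
begin

lemma realize:
  assumes sg: "simple_graph V E"
    and inj: "inj_on \<phi> D" and img: "\<phi> ` D \<subseteq> V"
    and hom: "\<forall>a\<in>D. \<forall>b\<in>D. DE a b \<longrightarrow> E (\<phi> a) (\<phi> b)"
    and HSS: "\<forall>u v. HS u v \<longrightarrow> u \<in> S \<and> v \<in> S"
    and HSsub: "\<forall>u v. HS u v \<longrightarrow> (\<exists>a\<in>D. \<exists>b\<in>D. u = \<phi> a \<and> v = \<phi> b \<and> graph_square D DE a b)"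
    and Ssub: "S \<subseteq> \<phi> ` D"
  shows "\<exists>T ET. is_subgraph S HS T ET \<and> is_subgraph T ET V (graph_square V E)
            \<and> graph_iso T ET D (graph_square D DE)"
proof -
  let ?Q = "graph_square D DE"
  define ET where "ET u v = (\<exists>a\<in>D. \<exists>b\<in>D. u = \<phi> a \<and> v = \<phi> b \<and> ?Q a b)" for u v
  have s1: "is_subgraph S HS (\<phi> ` D) ET"
    unfolding is_subgraph_def ET_def using HSS HSsub Ssub by blast
  have qh: "graph_square V E (\<phi> a) (\<phi> b)" if "a \<in> D" "b \<in> D" "?Q a b" for a b
  proof -
    have ne: "\<phi> a \<noteq> \<phi> b" using that inj unfolding graph_square_def inj_on_def by blast
    from that(3) consider "DE a b" | x where "x \<in> D" "DE a x" "DE x b"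
      unfolding graph_square_def by blast
    then show ?thesis
    proof cases
      case 1 then show ?thesis using ne that img hom unfolding graph_square_def by blast
    next
      case 2 then show ?thesis using ne that img hom unfolding graph_square_def
        by (metis image_subset_iff)
    qed
  qed
  have s2: "is_subgraph (\<phi> ` D) ET V (graph_square V E)"
    unfolding is_subgraph_def ET_def using img qh by blast
  have s3: "graph_iso (\<phi> ` D) ET D ?Q"
    unfolding graph_iso_def
  proof (intro exI conjI ballI)
    show "bij_betw (the_inv_into D \<phi>) (\<phi> ` D) D"
      by (rule bij_betw_the_inv_into) (rule inj_on_imp_bij_betw[OF inj])
    fix u v assume u: "u \<in> \<phi> ` D" and v: "v \<in> \<phi> ` D"
    then obtain a b where ab: "a \<in> D" "b \<in> D" "u = \<phi> a" "v = \<phi> b" by blast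
    have "the_inv_into D \<phi> u = a" "the_inv_into D \<phi> v = b"
      using ab inj by (auto simp: the_inv_into_f_f)
    moreover have "ET u v \<longleftrightarrow> ?Q a b"
      unfolding ET_def using ab inj unfolding inj_on_def by metis
    ultimately show "ET u v \<longleftrightarrow> ?Q (the_inv_into D \<phi> u) (the_inv_into D \<phi> v)" by simp
  qed
  show ?thesis using s1 s2 s3 by blast
qed

lemma sg_sym: "simple_graph V E \<Longrightarrow> E u v \<Longrightarrow> E v u"
  unfolding simple_graph_def by blast
lemma sg_ne: "simple_graph V E \<Longrightarrow> E u v \<Longrightarrow> u \<noteq> v"
  unfolding simple_graph_def by blast
lemma sg_V: "simple_graph V E \<Longrightarrow> E u v \<Longrightarrow> u \<in> V \<and> v \<in> V"
  unfolding simple_graph_def by blast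

lemma core:
  fixes V :: "'a set" and E :: "'a \<Rightarrow> 'a \<Rightarrow> bool" and n :: nat and S :: "'a set"
  assumes sg: "simple_graph V E"
    and n1: "n \<ge> 1"
    and SV: "S \<subseteq> V"
    and Seq: "S = insert c (l ` {1..n})"
    and linj: "inj_on l {1..n}"
    and Hcl: "\<forall>i\<in>{1..n}. graph_square V E c (l i)"
    and Hll: "\<forall>i\<in>{1..n}. \<forall>j\<in>{1..n}. i \<noteq> j \<longrightarrow> \<not> graph_square V E (l i) (l j)"
    and nadj: "\<forall>i\<in>{1..<n}. \<not> E c (l i)"
  shows "\<exists>T ET. is_subgraph S (induced_edges S (graph_square V E)) T ET
                \<and> is_subgraph T ET V (graph_square V E)
                \<and> (graph_iso T ET (D_V n) (graph_square (D_V n) (D_E n))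
                   \<or> graph_iso T ET (Dm_V n) (graph_square (Dm_V n) (Dm_E n)))"
proof -
  let ?H = "graph_square V E"
  define m where "m i = (if E c (l i) then l i else SOME x. x \<in> V \<and> E c x \<and> E x (l i))" for i
  have mprop: "m i \<in> V \<and> E c (m i) \<and> (m i = l i \<or> E (m i) (l i)) \<and> (\<not> E c (l i) \<longrightarrow> E (m i) (l i))"
    if i: "i \<in> {1..n}" for i
  proof (cases "E c (l i)")
    case True then show ?thesis using sg_V[OF sg True] by (simp add: m_def)
  next
    case False
    then have ex: "\<exists>x. x \<in> V \<and> E c x \<and> E x (l i)" using Hcl i unfolding graph_square_def by blast
    have "m i \<in> V \<and> E c (m i) \<and> E (m i) (l i)" using someI_ex[OF ex] False unfolding m_def
      by simp
    then show ?thesis using False by simp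
  qed
  have lV: "l i \<in> V" if "i \<in> {1..n}" for i using SV Seq that by blast
  have cV: "c \<in> V" using SV Seq by blast
  have near: False if i: "i \<in> {1..n}" and j: "j \<in> {1..n}" and ij: "i \<noteq> j"
    and x: "x \<in> V" and xi: "x = l i \<or> E x (l i)" and xj: "x = l j \<or> E x (l j)" for i j x
  proof -
    have lne: "l i \<noteq> l j" using linj i j ij unfolding inj_on_def by blast
    have "?H (l i) (l j)"
      using xi xj lne x lV[OF i] lV[OF j] sg_sym[OF sg] unfolding graph_square_def by blast
    then show False using Hll i j ij by blast
  qed
  define \<phi> where "\<phi> a = (if a = 0 then c else if a \<le> n then m a else l (a - n))" for a
  have injgen: "inj_on \<phi> D"
    if Dsub: "D \<subseteq> {0..2*n}" and Dl: "\<forall>i\<in>{1..n}. n + i \<in> D \<longrightarrow> m i \<noteq> l i" for D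
  proof (rule inj_onI)
    fix a b assume a: "a \<in> D" and b: "b \<in> D" and eq: "\<phi> a = \<phi> b"
    have cne_m: "c \<noteq> m i" if "i \<in> {1..n}" for i using mprop[OF that] sg_ne[OF sg] by blast
    have cne_l: "c \<noteq> l i" if "i \<in> {1..n}" for i using Hcl that unfolding graph_square_def by blast
    have mm: "m i \<noteq> m j" if "i \<in> {1..n}" "j \<in> {1..n}" "i \<noteq> j" for i j
    proof
      assume e: "m i = m j"
      have "m i \<in> V" "m i = l i \<or> E (m i) (l i)" "m i = l j \<or> E (m i) (l j)"
        using mprop[OF that(1)] mprop[OF that(2)] e by auto
      then show False by (rule near[OF that])
    qed
    have ml: "m i \<noteq> l j" if "i \<in> {1..n}" "j \<in> {1..n}" "i \<noteq> j" for i j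
    proof
      assume e: "m i = l j"
      have "m i \<in> V" "m i = l i \<or> E (m i) (l i)" "m i = l j \<or> E (m i) (l j)"
        using mprop[OF that(1)] e by auto
      then show False by (rule near[OF that])
    qed
    have ll: "l i \<noteq> l j" if "i \<in> {1..n}" "j \<in> {1..n}" "i \<noteq> j" for i j
      using linj that unfolding inj_on_def by blast
    have aa: "a \<le> 2*n" "b \<le> 2*n" using a b Dsub by auto
    have reg: "(x = 0 \<and> \<phi> x = c) \<or> (x \<in> {1..n} \<and> \<phi> x = m x)
        \<or> (x - n \<in> {1..n} \<and> x = n + (x - n) \<and> \<phi> x = l (x - n))" if "x \<le> 2 * n" for x
      using that unfolding \<phi>_def by auto
    have n_ne: "n + i \<noteq> j" if "i \<in> {1..n}" "j \<in> {1..n}" for i j using that by auto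
    from reg[OF aa(1)] reg[OF aa(2)] show "a = b"
    proof (elim disjE conjE)
      assume "a = 0" "\<phi> a = c" "b = 0" "\<phi> b = c" then show ?thesis by simp
    next
      assume "a = 0" "\<phi> a = c" "b \<in> {1..n}" "\<phi> b = m b" then show ?thesis using eq cne_m by auto
    next
      assume "a = 0" "\<phi> a = c" "b - n \<in> {1..n}" "b = n + (b - n)" "\<phi> b = l (b - n)" then show ?thesis using eq cne_l by auto
    next
      assume "a \<in> {1..n}" "\<phi> a = m a" "b = 0" "\<phi> b = c" then show ?thesis using eq cne_m by metis
    next
      assume "a \<in> {1..n}" "\<phi> a = m a" "b \<in> {1..n}" "\<phi> b = m b" then show ?thesis using eq mm by metis
    next
      assume A: "a \<in> {1..n}" "\<phi> a = m a" "b - n \<in> {1..n}" "b = n + (b - n)" "\<phi> b = l (b - n)"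
      show ?thesis
      proof (cases "a = b - n")
        case True
        then have "n + a \<in> D" using b A(4) by metis
        then show ?thesis using Dl A(1,2,5) eq True by metis
      next
        case False then show ?thesis using ml[OF A(1) A(3) False] A(2,5) eq by simp
      qed
    next
      assume "a - n \<in> {1..n}" "a = n + (a - n)" "\<phi> a = l (a - n)" "b = 0" "\<phi> b = c" then show ?thesis using eq cne_l by metis
    next
      assume A: "a - n \<in> {1..n}" "a = n + (a - n)" "\<phi> a = l (a - n)" "b \<in> {1..n}" "\<phi> b = m b"
      show ?thesis
      proof (cases "b = a - n")
        case True
        then have "n + b \<in> D" using a A(2) by metis
        then show ?thesis using Dl A(3,4,5) eq True by metis
      next
        case False then show ?thesis using ml[OF A(4) A(1) False] A(3,5) eq by simp
      qed
    next
      assume A: "a - n \<in> {1..n}" "a = n + (a - n)" "\<phi> a = l (a - n)"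
        "b - n \<in> {1..n}" "b = n + (b - n)" "\<phi> b = l (b - n)"
      show ?thesis
      proof (rule ccontr)
        assume "a \<noteq> b"
        then have "a - n \<noteq> b - n" using A(2,5) by metis
        then show False using ll[OF A(1) A(4)] A(3,6) eq by simp
      qed
    qed
  qed
  have homgen: "\<forall>a\<in>D. \<forall>b\<in>D. D_E n a b \<longrightarrow> E (\<phi> a) (\<phi> b)"
    if Dsub: "D \<subseteq> {0..2*n}" and Dl: "\<forall>i\<in>{1..n}. n + i \<in> D \<longrightarrow> E (m i) (l i)" for D
  proof (intro ballI impI)
    fix a b assume a: "a \<in> D" and b: "b \<in> D" and e: "D_E n a b"
    then obtain i where i: "i \<in> {1..n}" and
      cs: "(a = 0 \<and> b = i) \<or> (a = i \<and> b = 0) \<or> (a = i \<and> b = n + i) \<or> (a = n + i \<and> b = i)"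
      unfolding D_E_def by blast
    have Ei: "E c (m i)" using mprop[OF i] by blast
    show "E (\<phi> a) (\<phi> b)"
      using cs
    proof (elim disjE conjE)
      assume "a = 0" "b = i" then show ?thesis using Ei i unfolding \<phi>_def by simp
    next
      assume "a = i" "b = 0" then show ?thesis using Ei i sg_sym[OF sg] unfolding \<phi>_def by simp
    next
      assume "a = i" "b = n + i" then show ?thesis using Dl i b unfolding \<phi>_def by simp
    next
      assume "a = n + i" "b = i" then show ?thesis using Dl i a sg_sym[OF sg] unfolding \<phi>_def by simp
    qed
  qed
  have phi0: "\<phi> 0 = c" by (simp add: \<phi>_def)
  have phil: "\<phi> (n + i) = l i" if "i \<in> {1..n}" for i using that by (simp add: \<phi>_def)
  have phim: "\<phi> i = m i" if "i \<in> {1..n}" for i using that by (simp add: \<phi>_def)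
  have Hirr: "\<not> ?H x x" for x unfolding graph_square_def by simp
  have HSS: "\<forall>u v. induced_edges S ?H u v \<longrightarrow> u \<in> S \<and> v \<in> S"
    unfolding induced_edges_def by blast
  have HSgen: "\<forall>u v. induced_edges S ?H u v \<longrightarrow> (\<exists>a\<in>D. \<exists>b\<in>D. u = \<phi> a \<and> v = \<phi> b \<and> Q a b)"
    if D0: "0 \<in> D" and P: "\<forall>i\<in>{1..n}. pos i \<in> D \<and> \<phi> (pos i) = l i \<and> Q 0 (pos i) \<and> Q (pos i) 0"
    for D Q pos
  proof (intro allI impI)
    fix u v assume "induced_edges S ?H u v"
    then have u: "u \<in> S" and v: "v \<in> S" and h: "?H u v" unfolding induced_edges_def by auto
    from u Seq consider "u = c" | i where "i \<in> {1..n}" "u = l i" by blast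
    then show "\<exists>a\<in>D. \<exists>b\<in>D. u = \<phi> a \<and> v = \<phi> b \<and> Q a b"
    proof cases
      case 1
      from v Seq consider "v = c" | j where "j \<in> {1..n}" "v = l j" by blast
      then show ?thesis
      proof cases
        case 1 then show ?thesis using h Hirr \<open>u = c\<close> by simp
      next
        case (2 j) then show ?thesis using P D0 phi0 \<open>u = c\<close> by metis
      qed
    next
      case (2 i)
      note ui = this
      from v Seq consider "v = c" | j where "j \<in> {1..n}" "v = l j" by blast
      then show ?thesis
      proof cases
        case 1 then show ?thesis using P D0 phi0 ui by metis
      next
        case (2 j) then show ?thesis using h Hirr Hll ui by (cases "i = j") auto
      qed
    qed
  qed
  have phiV: "\<phi> ` D \<subseteq> V" if "D \<subseteq> {0..2*n}" for D
  proof
    fix x assume "x \<in> \<phi> ` D"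
    then obtain a where a: "a \<in> D" "x = \<phi> a" by blast
    then have "a \<le> 2 * n" using that by auto
    then show "x \<in> V"
    proof (cases "a = 0")
      case True then show ?thesis using a cV phi0 by simp
    next
      case a0: False
      show ?thesis
      proof (cases "a \<le> n")
        case True then show ?thesis using a a0 mprop[of a] by (simp add: \<phi>_def)
      next
        case False
        then have "a - n \<in> {1..n}" using \<open>a \<le> 2 * n\<close> by auto
        then show ?thesis using a a0 False lV by (simp add: \<phi>_def)
      qed
    qed
  qed
  have DE_basic: "D_E n 0 i \<and> D_E n i 0 \<and> D_E n i (n + i) \<and> D_E n (n + i) i" if "i \<in> {1..n}" for i
    using that unfolding D_E_def by blast
  show ?thesis
  proof (cases "E c (l n)")
    case False
    have nadj': "\<not> E c (l i)" if "i \<in> {1..n}" for i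
      using nadj False that by (cases "i = n") auto
    have Eml: "E (m i) (l i)" if "i \<in> {1..n}" for i using mprop[OF that] nadj'[OF that] by blast
    have Dsub: "D_V n \<subseteq> {0..2*n}" by (simp add: D_V_def)
    have inj: "inj_on \<phi> (D_V n)"
      by (rule injgen[OF Dsub]) (use Eml sg_ne[OF sg] in blast)
    have hom: "\<forall>a\<in>D_V n. \<forall>b\<in>D_V n. D_E n a b \<longrightarrow> E (\<phi> a) (\<phi> b)"
      by (rule homgen[OF Dsub]) (use Eml in blast)
    have HSsub: "\<forall>u v. induced_edges S ?H u v \<longrightarrow> (\<exists>a\<in>D_V n. \<exists>b\<in>D_V n. u = \<phi> a \<and> v = \<phi> b \<and> graph_square (D_V n) (D_E n) a b)"
    proof (rule HSgen[where pos = "\<lambda>i. n + i"])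
      show "0 \<in> D_V n" by (simp add: D_V_def)
      show "\<forall>i\<in>{1..n}. n + i \<in> D_V n \<and> \<phi> (n + i) = l i \<and> graph_square (D_V n) (D_E n) 0 (n + i) \<and> graph_square (D_V n) (D_E n) (n + i) 0"
      proof
        fix i assume i: "i \<in> {1..n}"
        have iD: "i \<in> D_V n" "n + i \<in> D_V n" "0 \<in> D_V n" using i by (auto simp: D_V_def)
        show "n + i \<in> D_V n \<and> \<phi> (n + i) = l i \<and> graph_square (D_V n) (D_E n) 0 (n + i) \<and> graph_square (D_V n) (D_E n) (n + i) 0"
          using iD phil[OF i] DE_basic[OF i] i unfolding graph_square_def by auto
      qed
    qed
    have SS: "S \<subseteq> \<phi> ` D_V n"
    proof
      fix x assume "x \<in> S"
      then consider "x = c" | i where "i \<in> {1..n}" "x = l i" using Seq by blast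
      then show "x \<in> \<phi> ` D_V n"
      proof cases
        case 1 then show ?thesis using phi0 by (force simp: D_V_def)
      next
        case (2 i)
        have "n + i \<in> D_V n" using 2 by (auto simp: D_V_def)
        then show ?thesis using phil[OF 2(1)] 2(2) by (metis imageI)
      qed
    qed
    from realize[OF sg inj phiV[OF Dsub] hom HSS HSsub SS] show ?thesis by blast
  next
    case True
    have mn: "m n = l n" using True by (simp add: m_def)
    have nin: "n \<in> {1..n}" using n1 by simp
    have Dsub: "Dm_V n \<subseteq> {0..2*n}" by (auto simp: Dm_V_def D_V_def)
    have Dmi: "i < n" if "i \<in> {1..n}" "n + i \<in> Dm_V n" for i
      using that by (auto simp: Dm_V_def D_V_def)
    have Eml: "E (m i) (l i)" if "i \<in> {1..n}" "n + i \<in> Dm_V n" for i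
      using mprop[OF that(1)] nadj Dmi[OF that] that(1) by auto
    have inj: "inj_on \<phi> (Dm_V n)"
      by (rule injgen[OF Dsub]) (use Eml sg_ne[OF sg] in blast)
    have hom0: "\<forall>a\<in>Dm_V n. \<forall>b\<in>Dm_V n. D_E n a b \<longrightarrow> E (\<phi> a) (\<phi> b)"
      by (rule homgen[OF Dsub]) (use Eml in blast)
    have hom: "\<forall>a\<in>Dm_V n. \<forall>b\<in>Dm_V n. Dm_E n a b \<longrightarrow> E (\<phi> a) (\<phi> b)"
      using hom0 unfolding Dm_E_def induced_edges_def by blast
    define pos where "pos i = (if i = n then n else n + i)" for i
    have HSsub: "\<forall>u v. induced_edges S ?H u v \<longrightarrow> (\<exists>a\<in>Dm_V n. \<exists>b\<in>Dm_V n. u = \<phi> a \<and> v = \<phi> b \<and> graph_square (Dm_V n) (Dm_E n) a b)"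
    proof (rule HSgen[where pos = pos])
      show "0 \<in> Dm_V n" using n1 by (simp add: Dm_V_def D_V_def)
      show "\<forall>i\<in>{1..n}. pos i \<in> Dm_V n \<and> \<phi> (pos i) = l i \<and> graph_square (Dm_V n) (Dm_E n) 0 (pos i) \<and> graph_square (Dm_V n) (Dm_E n) (pos i) 0"
      proof
        fix i assume i: "i \<in> {1..n}"
        show "pos i \<in> Dm_V n \<and> \<phi> (pos i) = l i \<and> graph_square (Dm_V n) (Dm_E n) 0 (pos i) \<and> graph_square (Dm_V n) (Dm_E n) (pos i) 0"
        proof (cases "i = n")
          case True
          have iD: "n \<in> Dm_V n" "0 \<in> Dm_V n" using n1 by (auto simp: Dm_V_def D_V_def)
          show ?thesis using iD True DE_basic[OF nin] phim[OF nin] mn n1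
            unfolding pos_def graph_square_def Dm_E_def induced_edges_def by auto
        next
          case False
          have iD: "i \<in> Dm_V n" "n + i \<in> Dm_V n" "0 \<in> Dm_V n" using i False by (auto simp: Dm_V_def D_V_def)
          show ?thesis using iD False DE_basic[OF i] phil[OF i] i
            unfolding pos_def graph_square_def Dm_E_def induced_edges_def by auto
        qed
      qed
    qed
    have SS: "S \<subseteq> \<phi> ` Dm_V n"
    proof
      fix x assume "x \<in> S"
      then consider "x = c" | i where "i \<in> {1..n}" "x = l i" using Seq by blast
      then show "x \<in> \<phi> ` Dm_V n"
      proof cases
        case 1
        have "0 \<in> Dm_V n" using n1 by (simp add: Dm_V_def D_V_def)
        then show ?thesis using phi0 1 by force
      next
        case (2 i)
        show ?thesis
        proof (cases "i = n")
          case True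
          have "n \<in> Dm_V n" using n1 by (auto simp: Dm_V_def D_V_def)
          then show ?thesis using phim[OF nin] mn 2 True by force
        next
          case False
          have "n + i \<in> Dm_V n" using 2 False by (auto simp: Dm_V_def D_V_def)
          then show ?thesis using phil[OF 2(1)] 2 by force
        qed
      qed
    qed
    from realize[OF sg inj phiV[OF Dsub] hom HSS HSsub SS] show ?thesis by blast
  qed
qed

theorem theorem3:
  fixes V :: "'a set" and E :: "'a \<Rightarrow> 'a \<Rightarrow> bool" and n :: nat and S :: "'a set"
  assumes "simple_graph V E"
    and "n \<ge> 1"
    and "S \<subseteq> V"
    and "graph_iso S (induced_edges S (graph_square V E)) (star_V n) (star_E n)"
  shows "\<exists>T ET. is_subgraph S (induced_edges S (graph_square V E)) T ET
                \<and> is_subgraph T ET V (graph_square V E)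
                \<and> (graph_iso T ET (D_V n) (graph_square (D_V n) (D_E n))
                   \<or> graph_iso T ET (Dm_V n) (graph_square (Dm_V n) (Dm_E n)))"
proof -
  note sg = assms(1) and n1 = assms(2) and SV = assms(3)
  let ?H = "graph_square V E"
  obtain f where bf: "bij_betw f S {0..n}"
    and fe: "\<forall>u\<in>S. \<forall>v\<in>S. induced_edges S ?H u v \<longleftrightarrow> star_E n (f u) (f v)"
    using assms(4) unfolding graph_iso_def star_V_def by blast
  define g where "g = inv_into S f"
  have bg: "bij_betw g {0..n} S" unfolding g_def by (rule bij_betw_inv_into[OF bf])
  have gS: "g k \<in> S" if "k \<in> {0..n}" for k using bg that unfolding bij_betw_def by blast
  have fg: "f (g k) = k" if "k \<in> {0..n}" for k
    using bf that unfolding g_def bij_betw_def by (simp add: f_inv_into_f)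
  have ginj: "inj_on g {0..n}" using bg unfolding bij_betw_def by blast
  have Sim: "S = g ` {0..n}" using bg unfolding bij_betw_def by blast
  define c where "c = g 0"
  have cV: "c \<in> V" using gS[of 0] SV c_def by auto
  have gV: "g i \<in> V" if "i \<in> {1..n}" for i using gS[of i] that SV by auto
  have Hcg: "?H c (g i)" if i: "i \<in> {1..n}" for i
  proof -
    have "star_E n (f (g 0)) (f (g i))" using fg[of 0] fg[of i] i unfolding star_E_def by auto
    then have "induced_edges S ?H (g 0) (g i)" using fe gS[of 0] gS[of i] i by auto
    then show ?thesis unfolding c_def induced_edges_def by blast
  qed
  have Hgg: "\<not> ?H (g i) (g j)" if i: "i \<in> {1..n}" and j: "j \<in> {1..n}" for i j
  proof -
    have "\<not> star_E n (f (g i)) (f (g j))" using fg[of i] fg[of j] i j unfolding star_E_def by auto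
    then have "\<not> induced_edges S ?H (g i) (g j)" using fe gS[of i] gS[of j] i j by auto
    then show ?thesis using gS[of i] gS[of j] i j unfolding induced_edges_def by auto
  qed
  have uniq: "i = j" if i: "i \<in> {1..n}" and j: "j \<in> {1..n}" and ei: "E c (g i)" and ej: "E c (g j)" for i j
  proof (rule ccontr)
    assume ij: "i \<noteq> j"
    then have "g i \<noteq> g j" using ginj i j unfolding inj_on_def by auto
    then have "?H (g i) (g j)" using ei ej cV gV[OF i] gV[OF j] sg_sym[OF sg] unfolding graph_square_def by blast
    then show False using Hgg i j by blast
  qed
  obtain k where k: "k \<in> {1..n}" and ku: "\<forall>i\<in>{1..n}. E c (g i) \<longrightarrow> i = k"
  proof (cases "\<exists>k\<in>{1..n}. E c (g k)")
    case True
    then obtain k where "k \<in> {1..n}" "E c (g k)" by blast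
    then show ?thesis using that uniq by blast
  next
    case False
    then show ?thesis using that[of n] n1 by auto
  qed
  define t where "t i = (if i = k then n else if i = n then k else i)" for i
  have tb: "t ` {1..n} = {1..n}"
  proof
    show "t ` {1..n} \<subseteq> {1..n}" using k n1 by (auto simp: t_def)
    show "{1..n} \<subseteq> t ` {1..n}"
    proof
      fix x assume x: "x \<in> {1..n}"
      have "t (t x) = x" by (auto simp: t_def)
      moreover have "t x \<in> {1..n}" using x k by (auto simp: t_def)
      ultimately show "x \<in> t ` {1..n}" by (metis imageI)
    qed
  qed
  have tinj: "inj_on t {1..n}" unfolding inj_on_def t_def by auto
  have tin: "t i \<in> {1..n}" if "i \<in> {1..n}" for i using tb that by blast
  define l where "l i = g (t i)" for i
  have linj: "inj_on l {1..n}"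
  proof -
    have "inj_on g (t ` {1..n})" using tb ginj by (auto intro: inj_on_subset)
    then show ?thesis unfolding l_def using tinj by (simp add: comp_inj_on[unfolded comp_def])
  qed
  have Seq: "S = insert c (l ` {1..n})"
  proof -
    have "{0..n} = insert 0 {1..n}" by auto
    then have "S = insert c (g ` {1..n})" using Sim c_def by auto
    also have "g ` {1..n} = l ` {1..n}" unfolding l_def using tb by (metis image_image)
    finally show ?thesis .
  qed
  have Hcl: "\<forall>i\<in>{1..n}. ?H c (l i)" using Hcg tin unfolding l_def by blast
  have Hll: "\<forall>i\<in>{1..n}. \<forall>j\<in>{1..n}. i \<noteq> j \<longrightarrow> \<not> ?H (l i) (l j)"
    using Hgg tin unfolding l_def by blast
  have nadj: "\<forall>i\<in>{1..<n}. \<not> E c (l i)"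
  proof
    fix i assume i: "i \<in> {1..<n}"
    then have "t i \<noteq> k" using k by (auto simp: t_def)
    moreover have "t i \<in> {1..n}" using tin i by auto
    ultimately show "\<not> E c (l i)" using ku unfolding l_def by blast
  qed
  show ?thesis by (rule core[OF sg n1 SV Seq linj Hcl Hll nadj])
qed

end
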